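(* Let $n\in\mathbb N$, let $K_1,\dots,K_n$ be singular kernel functions and let $J$ be an arbitrary $n$-field function. Then the difference function restricted to the regularity set, $\Phi|_Y:Y\to\mathbb R^n$, is proper: the preimage of every compact subset of $\mathbb R^n$ is compact. Moreover, for every sequence $(\mathbf x_k)$ in $Y$ converging to a point of the boundary $\partial Y$ one has $\|\Phi(\mathbf x_k)\|\to\infty$.
   Context: A kernel function is a function $K:(-1,0)\cup(0,1)\to\mathbb R$ that is concave on $(-1,0)$ and concave on $(0,1)$ and satisfies $\lim_{t\downarrow0}K(t)=\lim_{t\uparrow0}K(t)$. It is extended to $[-1,1]$ with values in $[-\infty,\infty)$ by its one-sided limits at $-1,0,1$. A kernel function is singular if $K(0)=-\infty$. An $n$-field function is a function $J:[0,1]\to[-\infty,\infty)$ that is bounded above and whose set of finite values has total weight strictly greater than $n$. Here the points $0$ and $1$ each have weight $1/2$ and every point of $(0,1)$ has weight $1$. $S=\{\mathbf y\in\mathbb R^n:0<y_1<\dots<y_n<1\}$ and $\overline S$ is its closure. $F(\mathbf y,t)=J(t)+\sum_{i=1}^nK_i(t-y_i)$, with the convention $a+(-\infty)=-\infty$. Set $y_0:=0$ and $y_{n+1}:=1$. Let $I_j(\mathbf y)=[y_j,y_{j+1}]$ and $m_j(\mathbf y)=\sup_{t\in I_j(\mathbf y)}F(\mathbf y,t)$. The regularity set is $Y=\{\mathbf y\in S:m_j(\mathbf y)\neq-\infty\ \forall j=0,\dots,n\}$. The difference function is $\Phi(\mathbf y)=(m_1(\mathbf y)-m_0(\mathbf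 y),\dots,m_n(\mathbf y)-m_{n-1}(\mathbf y))$. *)

theory Defs
  imports "HOL-Analysis.Analysis"
begin

text \<open>Values outside [-1,1] are irrelevant.\<close>

definition kernel_function :: "(real \<Rightarrow> ereal) \<Rightarrow> bool" where
  "kernel_function K \<longleftrightarrow>
     (\<forall>t\<in>{-1<..<0} \<union> {0<..<1}. \<bar>K t\<bar> \<noteq> \<infinity>) \<and>
     concave_on {-1<..<0} (\<lambda>t. real_of_ereal (K t)) \<and>
     concave_on {0<..<1} (\<lambda>t. real_of_ereal (K t)) \<and>
     (K \<longlongrightarrow> K 0) (at_left 0) \<and>
     (K \<longlongrightarrow> K 0) (at_right 0) \<and>
     (K \<longlongrightarrow> K (-1)) (at_right (-1)) \<and>
     (K \<longlongrightarrow> K 1) (at_left 1)"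

definition singular_kernel :: "(real \<Rightarrow> ereal) \<Rightarrow> bool" where
  "singular_kernel K \<longleftrightarrow> kernel_function K \<and> K 0 = -\<infinity>"

definition weight01 :: "real set \<Rightarrow> ereal" where
  "weight01 A = (if infinite (A \<inter> {0<..<1}) then \<infinity>
     else ereal (real (card (A \<inter> {0<..<1})) + (if 0 \<in> A then 1/2 else 0)
                 + (if 1 \<in> A then 1/2 else 0)))"

definition n_field_function :: "nat \<Rightarrow> (real \<Rightarrow> ereal) \<Rightarrow> bool" where
  "n_field_function n J \<longleftrightarrow>
     (\<exists>M::real. \<forall>t\<in>{0..1}. J t \<le> ereal M) \<and>
     weight01 {t\<in>{0..1}. J t \<noteq> -\<infinity>} > ereal (real n)"

text \<open>Points of R^n are vectors in real^'n, with 'n a finite linearly ordered index type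
of cardinality n; the k-th coordinate (k = 1..n) is the coordinate at the k-th smallest index.\<close>

definition idx :: "nat \<Rightarrow> 'n::{finite,linorder}" where
  "idx k = sorted_list_of_set (UNIV :: 'n set) ! (k - 1)"

definition pos :: "'n::{finite,linorder} \<Rightarrow> nat" where
  "pos i = card {j. j < i} + 1"

definition ypt :: "real ^ 'n::{finite,linorder} \<Rightarrow> nat \<Rightarrow> real" where
  "ypt y k = (if k = 0 then 0 else if k \<le> CARD('n) then y $ (idx k :: 'n) else 1)"

definition Sset :: "(real ^ 'n::{finite,linorder}) set" where
  "Sset = {y. \<forall>k\<le>CARD('n). ypt y k < ypt y (k + 1)}"

definition Ffun :: "(real \<Rightarrow> ereal) \<Rightarrow> ('n::{finite,linorder} \<Rightarrow> real \<Rightarrow> ereal)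
                     \<Rightarrow> real ^ 'n::{finite,linorder} \<Rightarrow> real \<Rightarrow> ereal" where
  "Ffun J K y t = J t + (\<Sum>i\<in>UNIV. K i (t - y $ i))"

definition mfun :: "(real \<Rightarrow> ereal) \<Rightarrow> ('n::{finite,linorder} \<Rightarrow> real \<Rightarrow> ereal)
                     \<Rightarrow> nat \<Rightarrow> real ^ 'n::{finite,linorder} \<Rightarrow> ereal" where
  "mfun J K j y = (SUP t\<in>{ypt y j .. ypt y (j + 1)}. Ffun J K y t)"

definition Yset :: "(real \<Rightarrow> ereal) \<Rightarrow> ('n::{finite,linorder} \<Rightarrow> real \<Rightarrow> ereal)
                     \<Rightarrow> (real ^ 'n::{finite,linorder}) set" where
  "Yset J K = {y \<in> Sset. \<forall>j\<le>CARD('n). mfun J K j y \<noteq> -\<infinity>}"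

text \<open>Difference function: the component at the index of position p (p = 1..n) is m_p - m_(p-1).\<close>
definition Phi :: "(real \<Rightarrow> ereal) \<Rightarrow> ('n::{finite,linorder} \<Rightarrow> real \<Rightarrow> ereal)
                     \<Rightarrow> real ^ 'n::{finite,linorder} \<Rightarrow> real ^ 'n::{finite,linorder}" where
  "Phi J K y = (\<chi> i. real_of_ereal (mfun J K (pos i) y) - real_of_ereal (mfun J K (pos i - 1) y))"

end

theory Submission
  imports Defs
begin



lemma idx_surj:
  "\<exists>k. 1 \<le> k \<and> k \<le> CARD('n) \<and> idx k = (i::'n::{finite,linorder})"
proof -
  let ?xs = "sorted_list_of_set (UNIV :: 'n set)"
  have "i \<in> set ?xs" by simp
  then obtain m where m: "m < length ?xs" "?xs ! m = i" unfolding in_set_conv_nth by blast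
  have "length ?xs = CARD('n)" by simp
  then show ?thesis using m by (intro exI[of _ "m+1"]) (auto simp: idx_def)
qed

lemma coord_ypt:
  "\<exists>k. 1 \<le> k \<and> k \<le> CARD('n) \<and> y $ i = ypt (y::real^'n::{finite,linorder}) k"
proof -
  obtain k where k: "1 \<le> k" "k \<le> CARD('n)" "idx k = i" using idx_surj[of i] by blast
  then have "ypt y k = y $ i" by (simp add: ypt_def)
  then show ?thesis using k by metis
qed

lemma ypt_0[simp]: "ypt y 0 = 0" by (simp add: ypt_def)
lemma ypt_last[simp]: "ypt (y::real^'n::{finite,linorder}) (CARD('n) + 1) = 1" by (simp add: ypt_def)
lemma ypt_last'[simp]: "ypt (y::real^'n::{finite,linorder}) (Suc CARD('n)) = 1" by (simp add: ypt_def)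

lemma Sset_step: "y \<in> Sset \<Longrightarrow> k \<le> CARD('n) \<Longrightarrow> ypt (y::real^'n::{finite,linorder}) k < ypt y (k+1)"
  unfolding Sset_def mem_Collect_eq by (erule allE[of _ k]) (erule mp)

lemma Sset_mono:
  assumes "y \<in> Sset" "k < l" "l \<le> CARD('n) + 1"
  shows "ypt (y::real^'n::{finite,linorder}) k < ypt y l"
  using assms(2,3)
proof (induction l)
  case 0 then show ?case by simp
next
  case (Suc l)
  have st: "ypt y l < ypt y (Suc l)" using Sset_step[OF assms(1), of l] Suc.prems by simp
  show ?case
  proof (cases "k = l")
    case True then show ?thesis using st by simp
  next
    case False then show ?thesis using Suc st by simp
  qed
qed

lemma Sset_le:
  assumes "y \<in> Sset" "k \<le> l" "l \<le> CARD('n) + 1"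
  shows "ypt (y::real^'n::{finite,linorder}) k \<le> ypt y l"
  using Sset_mono[OF assms(1), of k l] assms by (cases "k = l") auto

lemma Sset_coord:
  assumes "y \<in> Sset"
  shows "0 < (y::real^'n::{finite,linorder}) $ i \<and> y $ i < 1"
proof -
  obtain k where k: "1 \<le> k" "k \<le> CARD('n)" "y $ i = ypt y k" using coord_ypt by blast
  have "ypt y 0 < ypt y k" using Sset_mono[OF assms, of 0 k] k by simp
  moreover have "ypt y k < ypt y (CARD('n)+1)" using Sset_mono[OF assms, of k "CARD('n)+1"] k by simp
  ultimately show ?thesis using k by simp
qed

lemma coord_dist: "\<bar>x $ i - (y::real^'n::{finite,linorder}) $ i\<bar> \<le> dist x y"
  using component_le_norm_cart[of "x - y" i] by (simp add: dist_norm)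

lemma ypt_dist: "\<bar>ypt x k - ypt (y::real^'n::{finite,linorder}) k\<bar> \<le> dist x y"
proof (cases "k = 0")
  case True then show ?thesis by simp
next
  case False
  show ?thesis
  proof (cases "k \<le> CARD('n)")
    case True
    then have "ypt x k = x $ idx k" "ypt y k = y $ idx k" using False by (simp_all add: ypt_def)
    then show ?thesis using coord_dist by metis
  next
    case c: False
    then have "ypt x k = 1" "ypt y k = 1" using False by (simp_all add: ypt_def)
    then show ?thesis by simp
  qed
qed

lemma ypt_cover:
  assumes "y \<in> Sset" "t \<in> {0..1}"
  shows "\<exists>j\<le>CARD('n). t \<in> {ypt (y::real^'n::{finite,linorder}) j .. ypt y (j+1)}"
proof -
  let ?A = "{k. k \<le> CARD('n) \<and> ypt y k \<le> t}"
  have fin: "finite ?A" by auto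
  have ne: "0 \<in> ?A" using assms by simp
  define j where "j = Max ?A"
  have jA: "j \<in> ?A" unfolding j_def using fin ne by (intro Max_in) auto
  have "t \<le> ypt y (j+1)"
  proof (cases "j = CARD('n)")
    case True then show ?thesis using assms by simp
  next
    case False
    then have "j + 1 \<le> CARD('n)" using jA by simp
    moreover have "j + 1 \<notin> ?A" proof
      assume "j + 1 \<in> ?A" then have "j + 1 \<le> j" unfolding j_def using fin by (intro Max_ge) auto
      then show False by simp qed
    ultimately show ?thesis by simp
  qed
  then show ?thesis using jA by auto
qed

lemma coord_outside:
  assumes "y \<in> Sset" "j \<le> CARD('n)"
  shows "(y::real^'n::{finite,linorder}) $ i \<le> ypt y j \<or> ypt y (j+1) \<le> y $ i"
proof -
  obtain k where k: "1 \<le> k" "k \<le> CARD('n)" "y $ i = ypt y k" using coord_ypt by blast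
  show ?thesis
  proof (cases "k \<le> j")
    case True then show ?thesis using Sset_le[OF assms(1), of k j] k assms by simp
  next
    case False then show ?thesis using Sset_le[OF assms(1), of "j+1" k] k assms by simp
  qed
qed

definition goodpt :: "real^'n::{finite,linorder} \<Rightarrow> nat \<Rightarrow> real \<Rightarrow> bool" where
  "goodpt x j t \<longleftrightarrow> ypt x j \<le> t \<and> t \<le> ypt x (j+1) \<and> (j = 0 \<or> ypt x j < t)
      \<and> (j = CARD('n) \<or> t < ypt x (j+1))"

lemma goodpt_not_coord:
  assumes "y \<in> Sset" "j \<le> CARD('n)" "goodpt y j t"
  shows "t \<noteq> (y::real^'n::{finite,linorder}) $ i"
proof -
  obtain k where k: "1 \<le> k" "k \<le> CARD('n)" "y $ i = ypt y k" using coord_ypt by blast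
  show ?thesis
  proof (cases "k \<le> j")
    case True then show ?thesis using Sset_le[OF assms(1), of k j] k assms
      by (auto simp: goodpt_def)
  next
    case False then show ?thesis using Sset_le[OF assms(1), of "j+1" k] k assms
      by (auto simp: goodpt_def)
  qed
qed

lemma pos_inj: "inj (pos :: 'n::{finite,linorder} \<Rightarrow> nat)"
proof (rule injI)
  fix a b :: 'n assume eq: "pos a = pos b"
  show "a = b"
  proof (rule ccontr)
    assume "a \<noteq> b"
    then consider "a < b" | "b < a" by (meson linorder_neqE)
    then show False
    proof cases
      case 1
      then have "{j. j < a} \<subset> {j. j < b}" by auto
      then have "card {j. j < a} < card {j. j < b}" by (intro psubset_card_mono) auto
      then show False using eq by (simp add: pos_def)
    next
      case 2
      then have "{j. j < b} \<subset> {j. j < a}" by auto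
      then have "card {j. j < b} < card {j. j < a}" by (intro psubset_card_mono) auto
      then show False using eq by (simp add: pos_def)
    qed
  qed
qed

lemma pos_range: "pos (i::'n::{finite,linorder}) \<in> {1..CARD('n)}"
proof -
  have "{j. j < i} \<subset> UNIV" by auto
  then have "card {j. j < i} < CARD('n)" by (intro psubset_card_mono) auto
  then show ?thesis by (simp add: pos_def)
qed

lemma pos_bij: "bij_betw (pos :: 'n::{finite,linorder} \<Rightarrow> nat) UNIV {1..CARD('n)}"
proof -
  have sub: "range (pos :: 'n \<Rightarrow> nat) \<subseteq> {1..CARD('n)}" using pos_range by blast
  have "card (range (pos :: 'n \<Rightarrow> nat)) = CARD('n)" using pos_inj card_image by blast
  then have "range (pos :: 'n \<Rightarrow> nat) = {1..CARD('n)}" using sub by (intro card_subset_eq) auto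
  then show ?thesis using pos_inj by (simp add: bij_betw_def)
qed

lemma telescope:
  fixes r :: "nat \<Rightarrow> real"
  assumes "j \<le> l"
  shows "\<bar>r l - r j\<bar> \<le> (\<Sum>p\<in>{j<..l}. \<bar>r p - r (p - 1)\<bar>)"
  using assms
proof (induction l)
  case 0 then show ?case by simp
next
  case (Suc l)
  show ?case
  proof (cases "j = Suc l")
    case True then show ?thesis by simp
  next
    case False
    then have jl: "j \<le> l" using Suc.prems by simp
    have "{j<..Suc l} = insert (Suc l) {j<..l}" using jl by auto
    then have "(\<Sum>p\<in>{j<..Suc l}. \<bar>r p - r (p - 1)\<bar>) = \<bar>r (Suc l) - r l\<bar> + (\<Sum>p\<in>{j<..l}. \<bar>r p - r (p - 1)\<bar>)"
      by simp
    then show ?thesis using Suc.IH[OF jl] by linarith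
  qed
qed

lemma telescope_norm:
  fixes r :: "nat \<Rightarrow> real" and v :: "real^'n::{finite,linorder}"
  assumes "\<And>i. v $ i = r (pos i) - r (pos i - 1)" "j \<le> CARD('n)" "l \<le> CARD('n)"
  shows "\<bar>r l - r j\<bar> \<le> real CARD('n) * norm v"
proof -
  have key: "\<bar>r b - r a\<bar> \<le> (\<Sum>p\<in>{1..CARD('n)}. \<bar>r p - r (p - 1)\<bar>)" if "a \<le> b" "b \<le> CARD('n)" for a b
  proof -
    have "\<bar>r b - r a\<bar> \<le> (\<Sum>p\<in>{a<..b}. \<bar>r p - r (p - 1)\<bar>)" using telescope that by blast
    also have "\<dots> \<le> (\<Sum>p\<in>{1..CARD('n)}. \<bar>r p - r (p - 1)\<bar>)"
      using that by (intro sum_mono2) auto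
    finally show ?thesis .
  qed
  have "\<bar>r l - r j\<bar> \<le> (\<Sum>p\<in>{1..CARD('n)}. \<bar>r p - r (p - 1)\<bar>)"
    using key[of j l] key[of l j] assms by (cases "j \<le> l") (auto simp: abs_minus_commute)
  also have "\<dots> = (\<Sum>i\<in>(UNIV::'n set). \<bar>r (pos i) - r (pos i - 1)\<bar>)"
  proof -
    have b: "bij_betw (pos :: 'n \<Rightarrow> nat) UNIV {1..CARD('n)}" by (rule pos_bij)
    define g where "g = (\<lambda>p. \<bar>r p - r (p - 1)\<bar>)"
    have rng: "(pos :: 'n \<Rightarrow> nat) ` UNIV = {1..CARD('n)}" using b by (simp add: bij_betw_def)
    have inj: "inj_on (pos :: 'n \<Rightarrow> nat) UNIV" using b by (simp add: bij_betw_def)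
    have "(\<Sum>i\<in>(UNIV::'n set). g (pos i)) = (\<Sum>p\<in>(pos :: 'n \<Rightarrow> nat) ` UNIV. g p)"
      using sum.reindex[OF inj, of g] by (simp add: comp_def)
    then show ?thesis unfolding rng g_def by simp

  qed
  also have "\<dots> = (\<Sum>i\<in>UNIV. \<bar>v $ i\<bar>)" using assms by simp
  also have "\<dots> \<le> (\<Sum>i\<in>(UNIV::'n set). norm v)" by (intro sum_mono component_le_norm_cart)
  also have "\<dots> = real CARD('n) * norm v" by simp
  finally show ?thesis .
qed




lemma concave3:
  fixes f :: "real \<Rightarrow> real"
  assumes "concave_on S f" "p \<in> S" "r \<in> S" "p < q" "q < r"
  shows "(r - p) * f q \<ge> (r - q) * f p + (q - p) * f r"
proof -
  define u where "u = (q - p) / (r - p)"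
  have u: "0 \<le> u" "u \<le> 1" using assms by (auto simp: u_def field_simps)
  have ur: "u * (r - p) = q - p" using assms by (simp add: u_def)
  have "(1 - u) * p + u * r = p + u * (r - p)" by (simp add: algebra_simps)
  then have eq: "(1 - u) *\<^sub>R p + u *\<^sub>R r = q" using ur by simp
  have "f q \<ge> (1 - u) * f p + u * f r" using concave_onD[OF assms(1) u assms(2,3)] eq by simp
  then have "(r - p) * f q \<ge> (r - p) * ((1 - u) * f p + u * f r)"
    using assms by (intro mult_left_mono) auto
  also have "(r - p) * ((1 - u) * f p + u * f r) = ((r - p) * (1 - u)) * f p + ((r - p) * u) * f r"
    by (simp add: algebra_simps)
  also have "(r - p) * (1 - u) = r - q" using ur by (simp add: algebra_simps)
  also have "(r - p) * u = q - p" using ur by (simp add: algebra_simps)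
  finally show ?thesis .
qed

lemma concave_bounded_above:
  fixes f :: "real \<Rightarrow> real"
  assumes "concave_on {a<..<b} f" "a < b"
  shows "\<exists>B. \<forall>t\<in>{a<..<b}. f t \<le> B"
proof -
  define q where "q = (a + b) / 2"
  define p where "p = (3*a + b) / 4"
  define r where "r = (a + 3*b) / 4"
  define X where "X = \<bar>f q\<bar> + \<bar>f p\<bar> + \<bar>f r\<bar>"
  have inS: "p \<in> {a<..<b}" "q \<in> {a<..<b}" "r \<in> {a<..<b}" using assms(2)
    by (auto simp: p_def q_def r_def)
  have "f t \<le> 4 * X + \<bar>f q\<bar>" if t: "t \<in> {a<..<b}" for t
  proof -
    consider "t < q" | "t = q" | "q < t" by linarith
    then show ?thesis
    proof cases
      case 1
      have qr: "q < r" using assms(2) by (simp add: q_def r_def)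
      have c: "(r - t) * f q \<ge> (r - q) * f t + (q - t) * f r"
        using concave3[OF assms(1) t inS(3) 1 qr] .
      have h1: "(r - t) * f q \<le> (b - a) * \<bar>f q\<bar>"
      proof -
        have "(r - t) * f q \<le> (r - t) * \<bar>f q\<bar>" using 1 assms(2) by (intro mult_left_mono) (auto simp: q_def r_def)
        also have "\<dots> \<le> (b - a) * \<bar>f q\<bar>" by (intro mult_right_mono) (use t in \<open>auto simp: r_def field_simps\<close>)
        finally show ?thesis .
      qed
      have h2: "- ((q - t) * f r) \<le> (b - a) * \<bar>f r\<bar>"
      proof -
        have "- ((q - t) * f r) \<le> (q - t) * \<bar>f r\<bar>" using 1
          by (metis abs_ge_minus_self diff_ge_0_iff_ge less_eq_real_def mult_left_mono mult_minus_right)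
        also have "\<dots> \<le> (b - a) * \<bar>f r\<bar>" by (intro mult_right_mono) (use t in \<open>auto simp: q_def field_simps\<close>)
        finally show ?thesis .
      qed
      have rq: "r - q = (b - a) / 4" by (simp add: r_def q_def field_simps)
      have X': "(b - a) * X = (b - a) * \<bar>f q\<bar> + (b - a) * \<bar>f p\<bar> + (b - a) * \<bar>f r\<bar>"
        by (simp add: X_def algebra_simps)
      have nn: "(b - a) * \<bar>f p\<bar> \<ge> 0" using assms(2) by simp
      have "(r - q) * f t \<le> (b - a) * X" using c h1 h2 X' nn by linarith
      then have "(b - a) / 4 * f t \<le> (b - a) * X" using rq by simp
      then have "(b - a) / 4 * f t \<le> (b - a) / 4 * (4 * X)" by simp
      then have "f t \<le> 4 * X" by (rule mult_left_le_imp_le) (use assms(2) in simp)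
      then show ?thesis by simp
    next
      case 2 then show ?thesis by (simp add: X_def)
    next
      case 3
      have pq: "p < q" using assms(2) by (simp add: q_def p_def)
      have c: "(t - p) * f q \<ge> (t - q) * f p + (q - p) * f t"
        using concave3[OF assms(1) inS(1) t pq 3] .
      have h1: "(t - p) * f q \<le> (b - a) * \<bar>f q\<bar>"
      proof -
        have "(t - p) * f q \<le> (t - p) * \<bar>f q\<bar>" using 3 assms(2) by (intro mult_left_mono) (auto simp: q_def p_def)
        also have "\<dots> \<le> (b - a) * \<bar>f q\<bar>" by (intro mult_right_mono) (use t in \<open>auto simp: p_def field_simps\<close>)
        finally show ?thesis .
      qed
      have h2: "- ((t - q) * f p) \<le> (b - a) * \<bar>f p\<bar>"
      proof -
        have "- ((t - q) * f p) \<le> (t - q) * \<bar>f p\<bar>" using 3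
          by (metis abs_ge_minus_self diff_ge_0_iff_ge less_eq_real_def mult_left_mono mult_minus_right)
        also have "\<dots> \<le> (b - a) * \<bar>f p\<bar>" by (intro mult_right_mono) (use t in \<open>auto simp: q_def field_simps\<close>)
        finally show ?thesis .
      qed
      have rq: "q - p = (b - a) / 4" by (simp add: p_def q_def field_simps)
      have X': "(b - a) * X = (b - a) * \<bar>f q\<bar> + (b - a) * \<bar>f p\<bar> + (b - a) * \<bar>f r\<bar>"
        by (simp add: X_def algebra_simps)
      have nn: "(b - a) * \<bar>f r\<bar> \<ge> 0" using assms(2) by simp
      have "(q - p) * f t \<le> (b - a) * X" using c h1 h2 X' nn by linarith
      then have "(b - a) / 4 * f t \<le> (b - a) * X" using rq by simp
      then have "(b - a) / 4 * f t \<le> (b - a) / 4 * (4 * X)" by simp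
      then have "f t \<le> 4 * X" by (rule mult_left_le_imp_le) (use assms(2) in simp)
      then show ?thesis by simp
    qed
  qed
  then show ?thesis by blast
qed

lemma ereal_all_le_neg: "(\<And>N::real. a \<le> ereal (- N)) \<Longrightarrow> a = -\<infinity>"
proof (cases a)
  case (real r)
  assume h: "\<And>N::real. a \<le> ereal (- N)"
  from h[of "- r + 1"] real show ?thesis by simp
next
  case PInf
  assume h: "\<And>N::real. a \<le> ereal (- N)"
  from h[of 0] PInf show ?thesis by simp
qed simp

definition "Uset = {-1<..<0} \<union> {0<..<(1::real)}"

lemma open_Uset: "open Uset" by (auto simp: Uset_def)

locale kset =
  fixes J :: "real \<Rightarrow> ereal" and K :: "'n::{finite,linorder} \<Rightarrow> real \<Rightarrow> ereal"
  assumes sing: "\<And>i. singular_kernel (K i)"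
    and nf: "n_field_function CARD('n) J"
begin

definition kr :: "'n \<Rightarrow> real \<Rightarrow> real" where "kr i s = real_of_ereal (K i s)"

definition G :: "real^'n::{finite,linorder} \<Rightarrow> real \<Rightarrow> real" where
  "G x t = real_of_ereal (J t) + (\<Sum>i\<in>UNIV. kr i (t - x $ i))"

lemma K0[simp]: "K i 0 = -\<infinity>" using sing[of i] by (simp add: singular_kernel_def)

lemma Kfin: "s \<in> Uset \<Longrightarrow> K i s = ereal (kr i s)"
  using sing[of i] by (auto simp: singular_kernel_def kernel_function_def kr_def Uset_def ereal_real')

lemma kr_cont: assumes "s \<in> Uset" shows "isCont (kr i) s"
proof -
  have kf: "kernel_function (K i)" using sing[of i] by (simp add: singular_kernel_def)
  have c1: "concave_on {-1<..<0} (kr i)" and c2: "concave_on {0<..<1} (kr i)"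
    using kf by (auto simp: kernel_function_def kr_def[abs_def])
  have "continuous_on {-1<..<0} (\<lambda>x. - kr i x)"
    using c1 by (intro convex_on_continuous) (auto simp: concave_on_def)
  then have k1: "continuous_on {-1<..<0} (kr i)"
    using continuous_on_minus by fastforce
  have "continuous_on {0<..<1} (\<lambda>x. - kr i x)"
    using c2 by (intro convex_on_continuous) (auto simp: concave_on_def)
  then have k2: "continuous_on {0<..<1} (kr i)"
    using continuous_on_minus by fastforce
  show ?thesis
  proof (cases "s < 0")
    case True
    then have "s \<in> {-1<..<0}" using assms by (auto simp: Uset_def)
    moreover have "open {-1<..<(0::real)}" by simp
    ultimately show ?thesis using k1 continuous_on_eq_continuous_at by blast
  next
    case False
    then have "s \<in> {0<..<1}" using assms by (auto simp: Uset_def)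
    moreover have "open {0<..<(1::real)}" by simp
    ultimately show ?thesis using k2 continuous_on_eq_continuous_at by blast
  qed
qed

lemma kr_cont_on: "continuous_on Uset (kr i)"
  using kr_cont continuous_at_imp_continuous_on by blast

lemma Kbound_one: "\<exists>B\<ge>0. \<forall>s\<in>{-1<..<1}. K i s \<le> ereal B"
proof -
  have kf: "kernel_function (K i)" using sing[of i] by (simp add: singular_kernel_def)
  have c1: "concave_on {-1<..<0} (kr i)" and c2: "concave_on {0<..<1} (kr i)"
    using kf by (auto simp: kernel_function_def kr_def[abs_def])
  obtain B1 where B1: "\<forall>t\<in>{-1<..<0}. kr i t \<le> B1" using concave_bounded_above[OF c1] by auto
  obtain B2 where B2: "\<forall>t\<in>{0<..<1}. kr i t \<le> B2" using concave_bounded_above[OF c2] by auto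
  have "\<forall>s\<in>{-1<..<1}. K i s \<le> ereal (\<bar>B1\<bar> + \<bar>B2\<bar>)"
  proof
    fix s :: real assume s: "s \<in> {-1<..<1}"
    consider "s < 0" | "s = 0" | "s > 0" by linarith
    then show "K i s \<le> ereal (\<bar>B1\<bar> + \<bar>B2\<bar>)"
    proof cases
      case 1 then have "s \<in> Uset" "kr i s \<le> B1" using s B1 by (auto simp: Uset_def)
      then show ?thesis using Kfin by simp
    next
      case 2 then show ?thesis by simp
    next
      case 3 then have "s \<in> Uset" "kr i s \<le> B2" using s B2 by (auto simp: Uset_def)
      then show ?thesis using Kfin by simp
    qed
  qed
  then show ?thesis by (intro exI[of _ "\<bar>B1\<bar> + \<bar>B2\<bar>"]) auto
qed

lemma Kbound: "\<exists>B\<ge>0. \<forall>i. \<forall>s\<in>{-1<..<1}. K i s \<le> ereal B"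
proof -
  obtain Bf where Bf: "\<And>i. Bf i \<ge> 0 \<and> (\<forall>s\<in>{-1<..<1}. K i s \<le> ereal (Bf i))"
    using Kbound_one by metis
  have "Bf i \<le> (\<Sum>i\<in>UNIV. Bf i)" for i using Bf by (intro member_le_sum) auto
  then have "\<forall>i. \<forall>s\<in>{-1<..<1}. K i s \<le> ereal (\<Sum>i\<in>UNIV. Bf i)"
    using Bf by (meson ereal_less_eq(3) order.trans)
  moreover have "(\<Sum>i\<in>UNIV. Bf i) \<ge> 0" using Bf by (intro sum_nonneg) auto
  ultimately show ?thesis by blast
qed

definition "KB = (SOME B. B \<ge> 0 \<and> (\<forall>i. \<forall>s\<in>{-1<..<1}. K i s \<le> ereal B))"

lemma KB: "KB \<ge> 0" "s \<in> {-1<..<1} \<Longrightarrow> K i s \<le> ereal KB"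
  using someI_ex[OF Kbound] by (auto simp: KB_def)

definition "JM = (SOME M. \<forall>t\<in>{0..1}. J t \<le> ereal M)"

lemma JM: "t \<in> {0..1} \<Longrightarrow> J t \<le> ereal JM"
  using someI_ex[of "\<lambda>M. \<forall>t\<in>{0..1}. J t \<le> ereal M"] nf
  by (auto simp: JM_def n_field_function_def)

lemma Ksing: "\<exists>\<delta>>0. \<forall>i s. \<bar>s\<bar> < \<delta> \<longrightarrow> K i s \<le> ereal (- N)"
proof -
  have "eventually (\<lambda>s. K i s < ereal (- N)) (at 0)" for i
  proof -
    have kf: "kernel_function (K i)" using sing[of i] by (simp add: singular_kernel_def)
    have l: "(K i \<longlongrightarrow> -\<infinity>) (at_left 0)" "(K i \<longlongrightarrow> -\<infinity>) (at_right 0)"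
      using kf by (auto simp: kernel_function_def)
    show ?thesis unfolding eventually_at_split
      using order_tendstoD(2)[OF l(1), of "ereal (-N)"] order_tendstoD(2)[OF l(2), of "ereal (-N)"]
      by simp
  qed
  then have "eventually (\<lambda>s. \<forall>i. K i s < ereal (- N)) (at 0)" by (intro eventually_all_finite) auto
  then obtain d where d: "d > 0" "\<And>s. s \<noteq> 0 \<Longrightarrow> dist s 0 < d \<Longrightarrow> \<forall>i. K i s < ereal (- N)"
    unfolding eventually_at by auto
  have "\<forall>i s. \<bar>s\<bar> < d \<longrightarrow> K i s \<le> ereal (- N)"
  proof (intro allI impI)
    fix i s assume "\<bar>s\<bar> < d"
    then show "K i s \<le> ereal (- N)" using d(2)[of s] by (cases "s = 0") (auto simp: less_imp_le)
  qed
  then show ?thesis using d(1) by blast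
qed

lemma diff_in: "x \<in> Sset \<Longrightarrow> t \<in> {0..1} \<Longrightarrow> t - x $ i \<in> {-1<..<1}"
  using Sset_coord[of x i] by auto

lemma sumK_bound:
  assumes "x \<in> Sset" "t \<in> {0..1}"
  shows "(\<Sum>i\<in>UNIV. K i (t - x $ i)) \<le> ereal (real CARD('n) * KB)"
proof -
  have "(\<Sum>i\<in>UNIV. K i (t - x $ i)) \<le> (\<Sum>i\<in>(UNIV::'n set). ereal KB)"
    using assms by (intro sum_mono KB(2) diff_in)
  also have "\<dots> = ereal (real CARD('n) * KB)" by (simp add: sum_ereal[symmetric])
  finally show ?thesis .
qed

lemma F_bound:
  assumes "x \<in> Sset" "t \<in> {0..1}"
  shows "Ffun J K x t \<le> ereal (JM + real CARD('n) * KB)"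
proof -
  have "Ffun J K x t \<le> ereal JM + ereal (real CARD('n) * KB)"
    unfolding Ffun_def using JM[OF assms(2)] sumK_bound[OF assms] by (intro add_mono)
  then show ?thesis by simp
qed

lemma F_sing: "\<exists>\<delta>>0. \<forall>x\<in>Sset. \<forall>t\<in>{0..1}. \<forall>i. \<bar>t - x $ i\<bar> < \<delta> \<longrightarrow> Ffun J K x t \<le> ereal (- N)"
proof -
  obtain \<delta> where d: "\<delta> > 0" "\<forall>i s. \<bar>s\<bar> < \<delta> \<longrightarrow> K i s \<le> ereal (- (N + JM + real CARD('n) * KB))"
    using Ksing by blast
  have "Ffun J K x t \<le> ereal (- N)" if x: "x \<in> Sset" and t: "t \<in> {0..1}" and i0: "\<bar>t - x $ i0\<bar> < \<delta>" for x t i0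
  proof -
    have "(\<Sum>i\<in>UNIV - {i0}. K i (t - x $ i)) \<le> (\<Sum>i\<in>UNIV - {i0}. ereal KB)"
      using x t by (intro sum_mono KB(2) diff_in)
    also have "\<dots> = ereal (\<Sum>i\<in>UNIV - {i0}. KB)" by (simp add: sum_ereal[symmetric])
    also have "\<dots> \<le> ereal (\<Sum>i\<in>(UNIV::'n set). KB)"
    proof -
      have "(\<Sum>i\<in>UNIV - {i0}. KB) \<le> (\<Sum>i\<in>(UNIV::'n set). KB)"
        by (rule sum_mono2) (use KB(1) in auto)
      then show ?thesis by simp
    qed
    also have "\<dots> = ereal (real CARD('n) * KB)" by simp
    finally have rest: "(\<Sum>i\<in>UNIV - {i0}. K i (t - x $ i)) \<le> ereal (real CARD('n) * KB)" .
    have "Ffun J K x t = J t + (K i0 (t - x $ i0) + (\<Sum>i\<in>UNIV - {i0}. K i (t - x $ i)))"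
      unfolding Ffun_def by (simp add: sum.remove)
    also have "\<dots> \<le> ereal JM + (ereal (- (N + JM + real CARD('n) * KB)) + ereal (real CARD('n) * KB))"
      using JM[OF t] d(2) i0 rest by (intro add_mono) auto
    also have "\<dots> = ereal (- N)" by simp
    finally show ?thesis .
  qed
  then show ?thesis using d(1) by blast
qed

lemma J_fin: "t \<in> {0..1} \<Longrightarrow> J t \<noteq> -\<infinity> \<Longrightarrow> J t = ereal (real_of_ereal (J t))"
  using JM[of t] by (cases "J t") auto

lemma F_fin:
  assumes "t \<in> {0..1}" "J t \<noteq> -\<infinity>" "\<forall>i. t - x $ i \<in> Uset"
  shows "Ffun J K x t = ereal (G x t)"
proof -
  have "(\<Sum>i\<in>UNIV. K i (t - x $ i)) = (\<Sum>i\<in>UNIV. ereal (kr i (t - x $ i)))"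
    using assms(3) Kfin by (intro sum.cong) auto
  also have "\<dots> = ereal (\<Sum>i\<in>UNIV. kr i (t - x $ i))" by (simp add: sum_ereal)
  finally show ?thesis unfolding Ffun_def G_def
    using J_fin[OF assms(1,2)] by (metis plus_ereal.simps(1))
qed

lemma F_J_neginf:
  assumes "x \<in> Sset" "t \<in> {0..1}" "J t = -\<infinity>"
  shows "Ffun J K x t = -\<infinity>"
proof -
  have "(\<Sum>i\<in>UNIV. K i (t - x $ i)) \<noteq> \<infinity>" using sumK_bound[OF assms(1,2)] by auto
  then show ?thesis unfolding Ffun_def using assms(3) by (cases "\<Sum>i\<in>UNIV. K i (t - x $ i)") auto
qed

lemma F_coord_neginf:
  assumes "x \<in> Sset" "t \<in> {0..1}" "t = x $ i"
  shows "Ffun J K x t = -\<infinity>"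
proof (rule ereal_all_le_neg)
  fix N :: real
  obtain \<delta> where "\<delta> > 0" "\<forall>x\<in>Sset. \<forall>t\<in>{0..1}. \<forall>i. \<bar>t - x $ i\<bar> < \<delta> \<longrightarrow> Ffun J K x t \<le> ereal (- N)"
    using F_sing by blast
  moreover have "\<bar>t - x $ i\<bar> < \<delta>" using assms \<open>\<delta> > 0\<close> by simp
  ultimately show "Ffun J K x t \<le> ereal (- N)" using assms(1,2) by blast
qed

lemma Uset_coord: "x \<in> Sset \<Longrightarrow> t \<in> {0..1} \<Longrightarrow> t \<noteq> x $ i \<Longrightarrow> t - x $ i \<in> Uset"
  using Sset_coord[of x i] by (auto simp: Uset_def)

lemma F_char:
  assumes "x \<in> Sset" "t \<in> {0..1}"
  shows "Ffun J K x t \<noteq> -\<infinity> \<longleftrightarrow> J t \<noteq> -\<infinity> \<and> (\<forall>i. t \<noteq> x $ i)"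
proof
  assume "Ffun J K x t \<noteq> -\<infinity>"
  then show "J t \<noteq> -\<infinity> \<and> (\<forall>i. t \<noteq> x $ i)" using F_J_neginf F_coord_neginf assms by metis
next
  assume h: "J t \<noteq> -\<infinity> \<and> (\<forall>i. t \<noteq> x $ i)"
  then have "Ffun J K x t = ereal (G x t)" using assms Uset_coord by (intro F_fin) auto
  then show "Ffun J K x t \<noteq> -\<infinity>" by simp
qed

lemma G_cont:
  assumes "\<forall>i. t - y0 $ i \<in> Uset"
  shows "isCont (\<lambda>x. G x t) y0"
proof -
  have "isCont (\<lambda>x. kr i (t - x $ i)) y0" for i
  proof -
    have h1: "isCont (\<lambda>x. t - x $ i) y0" by (intro continuous_intros)
    have h2: "isCont (kr i) (t - y0 $ i)" using assms kr_cont by blast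
    show ?thesis using isCont_o2[OF h1 h2] .
  qed
  then show ?thesis unfolding G_def by (intro continuous_intros isCont_sum) auto
qed

lemma Uset_near:
  assumes "s0 \<in> Uset"
  shows "\<exists>r>0. \<forall>s. \<bar>s - s0\<bar> < r \<longrightarrow> s \<in> Uset"
proof -
  have "open Uset" by (rule open_Uset)
  then obtain r where "r > 0" "\<forall>s. dist s s0 < r \<longrightarrow> s \<in> Uset"
    using assms unfolding open_dist by (metis dist_commute)
  then show ?thesis by (auto simp: dist_real_def)
qed

lemma F_near:
  assumes "t \<in> {0..1}" "J t \<noteq> -\<infinity>" "\<forall>i. t - y0 $ i \<in> Uset" "e > 0"
  shows "eventually (\<lambda>x. Ffun J K x t = ereal (G x t) \<and> \<bar>G x t - G y0 t\<bar> < e) (nhds y0)"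
proof -
  have "eventually (\<lambda>x. t - x $ i \<in> Uset) (nhds y0)" for i
  proof -
    obtain r where r: "r > 0" "\<forall>s. \<bar>s - (t - y0 $ i)\<bar> < r \<longrightarrow> s \<in> Uset"
      using Uset_near assms(3) by blast
    show ?thesis unfolding eventually_nhds_metric
    proof (intro exI[of _ r] conjI allI impI)
      fix x assume "dist x y0 < r"
      then have "\<bar>(t - x $ i) - (t - y0 $ i)\<bar> < r" using coord_dist[of x i y0] by simp
      then show "t - x $ i \<in> Uset" using r by blast
    qed (rule r(1))
  qed
  then have e1: "eventually (\<lambda>x. \<forall>i. t - x $ i \<in> Uset) (nhds y0)" by (intro eventually_all_finite) auto
  have "((\<lambda>x. G x t) \<longlongrightarrow> G y0 t) (at y0)" using G_cont[OF assms(3)] by (simp add: isCont_def)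
  then have "eventually (\<lambda>x. dist (G x t) (G y0 t) < e) (at y0)" using assms(4) by (rule tendstoD)
  then have e2: "eventually (\<lambda>x. \<bar>G x t - G y0 t\<bar> < e) (nhds y0)"
    unfolding eventually_nhds_conv_at using assms(4) by (simp add: dist_real_def)
  show ?thesis using e1 e2 by eventually_elim (use F_fin assms in auto)
qed

end




context kset
begin

lemma ypt_range: "(x::real^'n::{finite,linorder}) \<in> Sset \<Longrightarrow> k \<le> CARD('n) + 1 \<Longrightarrow> 0 \<le> ypt x k \<and> ypt x k \<le> 1"
  using Sset_le[of x 0 k] Sset_le[of x k "CARD('n)+1"] by simp

lemma I_sub: "(x::real^'n::{finite,linorder}) \<in> Sset \<Longrightarrow> j \<le> CARD('n) \<Longrightarrow> t \<in> {ypt x j..ypt x (j+1)} \<Longrightarrow> t \<in> {0..1}"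
  using ypt_range[of x j] ypt_range[of x "j+1"] by auto

lemma m_ge: "t \<in> {ypt x j..ypt x (j+1)} \<Longrightarrow> Ffun J K x t \<le> mfun J K j x"
  unfolding mfun_def by (rule SUP_upper)

lemma m_le: "(\<And>t. t \<in> {ypt x j..ypt x (j+1)} \<Longrightarrow> Ffun J K x t \<le> c) \<Longrightarrow> mfun J K j x \<le> c"
  unfolding mfun_def by (rule SUP_least)

lemma m_bound: "x \<in> Sset \<Longrightarrow> j \<le> CARD('n) \<Longrightarrow> mfun J K j x \<le> ereal (JM + real CARD('n) * KB)"
  by (rule m_le) (use F_bound I_sub in blast)

lemma m_witness:
  assumes "mfun J K j x \<noteq> -\<infinity>"
  shows "\<exists>t\<in>{ypt x j..ypt x (j+1)}. Ffun J K x t \<noteq> -\<infinity>"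
proof (rule ccontr)
  assume "\<not> ?thesis"
  then have "mfun J K j x \<le> -\<infinity>" by (intro m_le) auto
  then show False using assms by simp
qed

lemma m_real: "x \<in> Yset J K \<Longrightarrow> j \<le> CARD('n) \<Longrightarrow> mfun J K j x = ereal (real_of_ereal (mfun J K j x))"
  using m_bound[of x j] unfolding Yset_def by (cases "mfun J K j x") auto

lemma goodpt_of_F:
  assumes xS: "x \<in> Sset" and j: "j \<le> CARD('n)" and tI: "t \<in> {ypt x j..ypt x (j+1)}"
    and Fne: "Ffun J K x t \<noteq> -\<infinity>"
  shows "goodpt x j t"
proof -
  have t01: "t \<in> {0..1}" using I_sub[OF xS j tI] .
  have nc: "\<forall>i. t \<noteq> x $ i" using F_char[OF xS t01] Fne by blast
  have A: "j = 0 \<or> ypt x j < t"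
  proof (cases "j = 0")
    case False
    then have "ypt x j = x $ idx j" using j by (simp add: ypt_def)
    then show ?thesis using nc tI by (metis atLeastAtMost_iff order_le_less)
  qed simp
  have B: "j = CARD('n) \<or> t < ypt x (j+1)"
  proof (cases "j = CARD('n)")
    case False
    then have "ypt x (j+1) = x $ idx (j+1)" using j by (simp add: ypt_def)
    then show ?thesis using nc tI by (metis atLeastAtMost_iff order_le_less)
  qed simp
  show ?thesis unfolding goodpt_def using A B tI by auto
qed

lemma goodpt_near:
  assumes gp: "goodpt (y0::real^'n::{finite,linorder}) j t" and j: "j \<le> CARD('n)"
  shows "eventually (\<lambda>x. goodpt x j t) (nhds y0)"
proof -
  define d1 where "d1 = (if j = 0 then 1 else t - ypt y0 j)"
  define d2 where "d2 = (if j = CARD('n) then 1 else ypt y0 (j+1) - t)"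
  have d1: "d1 > 0" using gp by (auto simp: d1_def goodpt_def)
  have d2: "d2 > 0" using gp by (auto simp: d2_def goodpt_def)
  show ?thesis unfolding eventually_nhds_metric
  proof (intro exI[of _ "min d1 d2"] conjI allI impI)
    show "min d1 d2 > 0" using d1 d2 by simp
    fix x assume dx: "dist x y0 < min d1 d2"
    have e1: "\<bar>ypt x j - ypt y0 j\<bar> < d1" using ypt_dist[of x j y0] dx by linarith
    have e2: "\<bar>ypt x (j+1) - ypt y0 (j+1)\<bar> < d2" using ypt_dist[of x "j+1" y0] dx by linarith
    have L: "(j = 0 \<or> ypt x j < t) \<and> ypt x j \<le> t"
    proof (cases "j = 0")
      case True then show ?thesis using gp by (simp add: goodpt_def)
    next
      case False then have "d1 = t - ypt y0 j" by (simp add: d1_def)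
      then show ?thesis using e1 False by linarith
    qed
    have R: "(j = CARD('n) \<or> t < ypt x (j+1)) \<and> t \<le> ypt x (j+1)"
    proof (cases "j = CARD('n)")
      case True
      then have "ypt x (j+1) = 1" "ypt y0 (j+1) = 1" by simp_all
      then show ?thesis using gp True by (simp add: goodpt_def)
    next
      case False then have "d2 = ypt y0 (j+1) - t" by (simp add: d2_def)
      then show ?thesis using e2 False by linarith
    qed
    show "goodpt x j t" unfolding goodpt_def using L R by blast
  qed
qed

lemma Sset_near:
  assumes "(y0::real^'n::{finite,linorder}) \<in> Sset"
  shows "eventually (\<lambda>x. x \<in> Sset) (nhds y0)"
proof -
  have "eventually (\<lambda>x. ypt x k < ypt x (k+1)) (nhds y0)" if k: "k \<in> {..CARD('n)}" for k
  proof -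
    define d where "d = (ypt y0 (k+1) - ypt y0 k) / 2"
    have "d > 0" using Sset_step[OF assms, of k] k by (simp add: d_def)
    then show ?thesis unfolding eventually_nhds_metric
    proof (intro exI[of _ d] conjI allI impI)
      fix x assume dx: "dist x y0 < d"
      have "\<bar>ypt x k - ypt y0 k\<bar> < d" using ypt_dist[of x k y0] dx by linarith
      moreover have "\<bar>ypt x (k+1) - ypt y0 (k+1)\<bar> < d" using ypt_dist[of x "k+1" y0] dx by linarith
      ultimately show "ypt x k < ypt x (k+1)" unfolding d_def abs_less_iff by (elim conjE) argo
    qed
  qed
  then have "eventually (\<lambda>x. \<forall>k\<in>{..CARD('n)}. ypt x k < ypt x (k+1)) (nhds y0)"
    by (intro eventually_ball_finite) auto
  then show ?thesis by eventually_elim (simp add: Sset_def)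
qed

lemma mfin_near:
  assumes y0: "y0 \<in> Sset" and j: "j \<le> CARD('n)" and mne: "mfun J K j y0 \<noteq> -\<infinity>"
  shows "eventually (\<lambda>x. x \<in> Sset \<longrightarrow> mfun J K j x \<noteq> -\<infinity>) (nhds y0)"
proof -
  obtain t where tI: "t \<in> {ypt y0 j..ypt y0 (j+1)}" and Fne: "Ffun J K y0 t \<noteq> -\<infinity>"
    using m_witness[OF mne] by blast
  have t01: "t \<in> {0..1}" using I_sub[OF y0 j tI] .
  have Jt: "J t \<noteq> -\<infinity>" using F_char[OF y0 t01] Fne by blast
  have gp: "goodpt y0 j t" by (rule goodpt_of_F[OF y0 j tI Fne])
  show ?thesis using goodpt_near[OF gp j]
  proof eventually_elim
    case (elim x)
    show ?case
    proof
      assume xS: "x \<in> Sset"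
      have "\<forall>i. t \<noteq> x $ i" using goodpt_not_coord[OF xS j elim] by blast
      then have "Ffun J K x t \<noteq> -\<infinity>" using F_char[OF xS t01] Jt by blast
      moreover have "Ffun J K x t \<le> mfun J K j x" using elim by (intro m_ge) (simp add: goodpt_def)
      ultimately show "mfun J K j x \<noteq> -\<infinity>" by auto
    qed
  qed
qed

lemma Y_near:
  assumes "y0 \<in> Yset J K"
  shows "eventually (\<lambda>x. x \<in> Yset J K) (nhds y0)"
proof -
  have y0: "y0 \<in> Sset" and m: "\<forall>j\<le>CARD('n). mfun J K j y0 \<noteq> -\<infinity>" using assms by (auto simp: Yset_def)
  have "\<forall>j\<in>{..CARD('n)}. eventually (\<lambda>x. x \<in> Sset \<longrightarrow> mfun J K j x \<noteq> -\<infinity>) (nhds y0)"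
    using mfin_near[OF y0] m by auto
  then have "eventually (\<lambda>x. \<forall>j\<in>{..CARD('n)}. x \<in> Sset \<longrightarrow> mfun J K j x \<noteq> -\<infinity>) (nhds y0)"
    by (intro eventually_ball_finite) auto
  then show ?thesis using Sset_near[OF y0] by eventually_elim (auto simp: Yset_def)
qed

lemma Y_open: "open (Yset J K)"
  unfolding open_subopen[of "Yset J K"]
proof
  fix y0 assume "y0 \<in> Yset J K"
  from Y_near[OF this] obtain S where "open S" "y0 \<in> S" "\<forall>x\<in>S. x \<in> Yset J K"
    unfolding eventually_nhds by blast
  then show "\<exists>T. open T \<and> y0 \<in> T \<and> T \<subseteq> Yset J K" by blast
qed

end




context kset
begin

lemma pos_margin:
  assumes "(y0::real^'n::{finite,linorder}) \<in> Sset"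
  shows "\<exists>a>0. \<forall>i. a \<le> y0 $ i \<and> y0 $ i \<le> 1 - a"
proof -
  define a where "a = Min (range (\<lambda>i. min (y0 $ i) (1 - y0 $ i)))"
  have fin: "finite (range (\<lambda>i. min (y0 $ i) (1 - y0 $ i)))" by simp
  have "a > 0" unfolding a_def using fin Sset_coord[OF assms] by (subst Min_gr_iff) auto
  moreover have "a \<le> min (y0 $ i) (1 - y0 $ i)" for i unfolding a_def using fin by (intro Min_le) auto
  then have b: "a \<le> y0 $ i \<and> a \<le> 1 - y0 $ i" for i by (simp add: min.bounded_iff)
  have "\<forall>i. a \<le> y0 $ i \<and> y0 $ i \<le> 1 - a"
  proof
    fix i show "a \<le> y0 $ i \<and> y0 $ i \<le> 1 - a" using b[of i] by argo
  qed
  ultimately show ?thesis by blast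
qed

lemma m_cont:
  assumes y0: "y0 \<in> Yset J K" and j: "j \<le> CARD('n)" and eta: "\<eta> > 0"
  shows "eventually (\<lambda>x. \<bar>real_of_ereal (mfun J K j x) - real_of_ereal (mfun J K j y0)\<bar> < \<eta>) (nhds y0)"
proof -
  have yS: "y0 \<in> Sset" using y0 by (simp add: Yset_def)
  define \<mu> where "\<mu> = real_of_ereal (mfun J K j y0)"
  have mu: "mfun J K j y0 = ereal \<mu>" unfolding \<mu>_def by (rule m_real[OF y0 j])
  have Npos: "real CARD('n) > 0" by simp
  have "ereal (\<mu> - \<eta>/2) < mfun J K j y0" using mu eta by simp
  then obtain t where tI: "t \<in> {ypt y0 j..ypt y0 (j+1)}" and tF: "ereal (\<mu> - \<eta>/2) < Ffun J K y0 t"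
    unfolding mfun_def less_SUP_iff by blast
  have t01: "t \<in> {0..1}" using I_sub[OF yS j tI] .
  have Fne: "Ffun J K y0 t \<noteq> -\<infinity>" using tF by auto
  have Jt: "J t \<noteq> -\<infinity>" and tc: "\<forall>i. t \<noteq> y0 $ i" using F_char[OF yS t01] Fne by auto
  have U0: "\<forall>i. t - y0 $ i \<in> Uset" using Uset_coord[OF yS t01] tc by blast
  have Fy0: "Ffun J K y0 t = ereal (G y0 t)" by (rule F_fin[OF t01 Jt U0])
  have Gy0: "\<mu> - \<eta>/2 < G y0 t" using tF Fy0 by simp
  have gp: "goodpt y0 j t" by (rule goodpt_of_F[OF yS j tI Fne])
  have ev_low: "eventually (\<lambda>x. ereal (\<mu> - \<eta>) < mfun J K j x) (nhds y0)"
    using F_near[OF t01 Jt U0 half_gt_zero[OF eta]] goodpt_near[OF gp j]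
  proof eventually_elim
    case (elim x)
    have "Ffun J K x t \<le> mfun J K j x" using elim by (intro m_ge) (simp add: goodpt_def)
    moreover have "\<mu> - \<eta> < G x t" using elim Gy0 by argo
    then have "ereal (\<mu> - \<eta>) < Ffun J K x t" using elim by simp
    ultimately show ?case by (rule order_less_le_trans[rotated])
  qed
  obtain a where a: "a > 0" "\<forall>i. a \<le> y0 $ i \<and> y0 $ i \<le> 1 - a" using pos_margin[OF yS] by blast
  obtain \<delta> where d: "\<delta> > 0"
    "\<forall>x\<in>Sset. \<forall>t\<in>{0..1}. \<forall>i. \<bar>t - x $ i\<bar> < \<delta> \<longrightarrow> Ffun J K x t \<le> ereal (- (- \<mu>))"
    using F_sing by blast
  define Q where "Q = {-1 + a/2 .. -\<delta>/2} \<union> {\<delta>/2 .. 1 - a/2}"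
  have QU: "Q \<subseteq> Uset" using a(1) d(1) by (auto simp: Q_def Uset_def)
  have cQ: "compact Q" by (simp add: Q_def compact_Un)
  have "\<exists>\<rho>>0. \<forall>s\<in>Q. \<forall>s'\<in>Q. \<bar>s' - s\<bar> < \<rho> \<longrightarrow> \<bar>kr i s' - kr i s\<bar> < \<eta> / (2 * real CARD('n))" for i
  proof -
    have "continuous_on Q (kr i)" using kr_cont_on QU by (rule continuous_on_subset)
    then have "uniformly_continuous_on Q (kr i)" using cQ by (intro compact_uniformly_continuous)
    moreover have "\<eta> / (2 * real CARD('n)) > 0" using eta Npos by simp
    ultimately show ?thesis unfolding uniformly_continuous_on_def dist_real_def by blast
  qed
  then have ex: "\<forall>i. \<exists>\<rho>. \<rho> > 0 \<and> (\<forall>s\<in>Q. \<forall>s'\<in>Q. \<bar>s' - s\<bar> < \<rho> \<longrightarrow> \<bar>kr i s' - kr i s\<bar> < \<eta> / (2 * real CARD('n)))"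
    by blast
  then obtain \<rho> where rho': "\<forall>i. \<rho> i > 0 \<and> (\<forall>s\<in>Q. \<forall>s'\<in>Q. \<bar>s' - s\<bar> < \<rho> i \<longrightarrow> \<bar>kr i s' - kr i s\<bar> < \<eta> / (2 * real CARD('n)))"
    using choice[OF ex] by blast
  have rho: "\<rho> i > 0 \<and> (\<forall>s\<in>Q. \<forall>s'\<in>Q. \<bar>s' - s\<bar> < \<rho> i \<longrightarrow> \<bar>kr i s' - kr i s\<bar> < \<eta> / (2 * real CARD('n)))" for i
    using rho' by blast
  have ev_d: "eventually (\<lambda>x. dist x y0 < min (\<delta>/2) (a/2)) (nhds y0)"
    unfolding eventually_nhds_metric using d(1) a(1) by (intro exI[of _ "min (\<delta>/2) (a/2)"]) auto
  have "eventually (\<lambda>x. dist x y0 < \<rho> i) (nhds y0)" for i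
    unfolding eventually_nhds_metric using rho[of i] by blast
  then have ev_r: "eventually (\<lambda>x. \<forall>i. dist x y0 < \<rho> i) (nhds y0)" by (intro eventually_all_finite) auto
  have ev_up: "eventually (\<lambda>x. x \<in> Sset \<longrightarrow> mfun J K j x \<le> ereal (\<mu> + \<eta>/2)) (nhds y0)"
    using ev_d ev_r
  proof eventually_elim
    case (elim x)
    show ?case
    proof
      assume xS: "x \<in> Sset"
      have cd: "\<bar>x $ i - y0 $ i\<bar> < \<delta>/2" "\<bar>x $ i - y0 $ i\<bar> < a/2" for i
        using coord_dist[of x i y0] elim(1) by linarith+
      have pd: "\<bar>ypt x k - ypt y0 k\<bar> < \<delta>/2" for k
        using ypt_dist[of x k y0] elim(1) by linarith
      show "mfun J K j x \<le> ereal (\<mu> + \<eta>/2)"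
      proof (rule m_le)
        fix t assume tI: "t \<in> {ypt x j..ypt x (j+1)}"
        have t01: "t \<in> {0..1}" using I_sub[OF xS j tI] .
        show "Ffun J K x t \<le> ereal (\<mu> + \<eta>/2)"
        proof (cases "\<exists>i. \<bar>t - x $ i\<bar> < \<delta>")
          case True
          then have "Ffun J K x t \<le> ereal \<mu>" using d(2) xS t01 by auto
          moreover have "ereal \<mu> \<le> ereal (\<mu> + \<eta>/2)" using eta by simp
          ultimately show ?thesis by (rule order_trans)
        next
          case False
          then have far: "\<And>i. \<delta> \<le> \<bar>t - x $ i\<bar>" by (simp add: not_less)
          show ?thesis
          proof (cases "J t = -\<infinity>")
            case True then show ?thesis using F_J_neginf[OF xS t01] by simp
          next
            case Jt: False
            have lo: "ypt y0 j \<le> t"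
            proof (cases "j = 0")
              case True then show ?thesis using t01 by simp
            next
              case False
              then have e: "ypt x j = x $ idx j" using j by (simp add: ypt_def)
              have "\<delta> \<le> t - ypt x j" using far[of "idx j"] tI e by auto
              then show ?thesis using pd[of j] by argo
            qed
            have hi: "t \<le> ypt y0 (j+1)"
            proof (cases "j = CARD('n)")
              case True then show ?thesis using t01 by simp
            next
              case False
              then have e: "ypt x (j+1) = x $ idx (j+1)" using j by (simp add: ypt_def)
              have "\<delta> \<le> ypt x (j+1) - t" using far[of "idx (j+1)"] tI e by auto
              then show ?thesis using pd[of "j+1"] by argo
            qed
            have Fy: "Ffun J K y0 t \<le> ereal \<mu>" using m_ge[of t y0 j] lo hi mu by simp
            have Ux: "\<forall>i. t - x $ i \<in> Uset"
            proof
              fix i have "t \<noteq> x $ i" using far[of i] d(1) by auto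
              then show "t - x $ i \<in> Uset" using Uset_coord[OF xS t01] by blast
            qed
            have Uy: "\<forall>i. t - y0 $ i \<in> Uset"
            proof
              fix i have "t \<noteq> y0 $ i" using far[of i] cd(1)[of i] by argo
              then show "t - y0 $ i \<in> Uset" using Uset_coord[OF yS t01] by blast
            qed
            have Fx: "Ffun J K x t = ereal (G x t)" by (rule F_fin[OF t01 Jt Ux])
            have Fy': "Ffun J K y0 t = ereal (G y0 t)" by (rule F_fin[OF t01 Jt Uy])
            have Gy: "G y0 t \<le> \<mu>" using Fy Fy' by simp
            have each: "kr i (t - x $ i) - kr i (t - y0 $ i) \<le> \<eta> / (2 * real CARD('n))" for i
            proof -
              have xb: "a/2 \<le> x $ i" "x $ i \<le> 1 - a/2" using a(2)[rule_format, of i] cd(2)[of i] by argo+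
              have fr: "\<delta> \<le> \<bar>t - x $ i\<bar>" by (rule far)
              have s'Q: "t - x $ i \<in> Q"
              proof (cases "t - x $ i \<le> 0")
                case True
                with fr have "t - x $ i \<le> - \<delta>" by (simp add: abs_if split: if_splits)
                then have "t - x $ i \<in> {-1 + a/2 .. -\<delta>/2}" using xb t01 d(1) by auto
                then show ?thesis unfolding Q_def by blast
              next
                case False
                with fr have "\<delta> \<le> t - x $ i" by (simp add: abs_if split: if_splits)
                then have "t - x $ i \<in> {\<delta>/2 .. 1 - a/2}" using xb t01 d(1) by auto
                then show ?thesis unfolding Q_def by blast
              qed
              have yb: "a \<le> y0 $ i" "y0 $ i \<le> 1 - a" using a(2) by auto
              have fr2: "\<delta>/2 \<le> \<bar>t - y0 $ i\<bar>" using far[of i] cd(1)[of i] by argo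
              have sQ: "t - y0 $ i \<in> Q"
              proof (cases "t - y0 $ i \<le> 0")
                case True
                with fr2 have "t - y0 $ i \<le> - (\<delta>/2)" by (simp add: abs_if split: if_splits)
                then have "t - y0 $ i \<in> {-1 + a/2 .. -\<delta>/2}" using yb t01 a(1) by auto
                then show ?thesis unfolding Q_def by blast
              next
                case False
                with fr2 have "\<delta>/2 \<le> t - y0 $ i" by (simp add: abs_if split: if_splits)
                then have "t - y0 $ i \<in> {\<delta>/2 .. 1 - a/2}" using yb t01 a(1) by auto
                then show ?thesis unfolding Q_def by blast
              qed
              have "\<bar>(t - x $ i) - (t - y0 $ i)\<bar> < \<rho> i"
              proof -
                have "\<bar>(t - x $ i) - (t - y0 $ i)\<bar> = \<bar>x $ i - y0 $ i\<bar>" by argo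
                moreover have "dist x y0 < \<rho> i" using elim(2) by blast
                ultimately show ?thesis using coord_dist[of x i y0] by linarith
              qed
              then have "\<bar>kr i (t - x $ i) - kr i (t - y0 $ i)\<bar> < \<eta> / (2 * real CARD('n))"
                using rho[of i] s'Q sQ by blast
              then show ?thesis by simp
            qed
            have "G x t - G y0 t = (\<Sum>i\<in>UNIV. kr i (t - x $ i) - kr i (t - y0 $ i))"
              by (simp add: G_def sum_subtractf)
            also have "\<dots> \<le> (\<Sum>i\<in>(UNIV::'n set). \<eta> / (2 * real CARD('n)))"
              by (intro sum_mono each)
            also have "\<dots> = \<eta> / 2" using Npos by simp
            finally have "G x t \<le> \<mu> + \<eta>/2" using Gy by argo
            then show ?thesis using Fx by simp
          qed
        qed
      qed
    qed
  qed
  show ?thesis using ev_low ev_up Sset_near[OF yS]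
  proof eventually_elim
    case (elim x)
    then have lo: "ereal (\<mu> - \<eta>) < mfun J K j x" and hi: "mfun J K j x \<le> ereal (\<mu> + \<eta>/2)" by auto
    then obtain r where r: "mfun J K j x = ereal r" by (cases "mfun J K j x") auto
    then show ?case using lo hi mu eta by auto
  qed
qed

end




lemma ev_seq: "x \<longlonglongrightarrow> y0 \<Longrightarrow> eventually P (nhds y0) \<Longrightarrow> eventually (\<lambda>k. P (x k)) sequentially"
  unfolding filterlim_iff[symmetric] by (metis filterlim_iff)

context kset
begin

lemma lower_exists:
  assumes rng: "\<forall>i. 0 \<le> (y0::real^'n::{finite,linorder}) $ i \<and> y0 $ i \<le> 1"
  shows "\<exists>t\<in>{0..1}. J t \<noteq> -\<infinity> \<and> (\<forall>i. t - y0 $ i \<in> Uset)"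
proof (rule ccontr)
  assume no: "\<not> ?thesis"
  define Z where "Z = {t\<in>{0..1}. J t \<noteq> -\<infinity>}"
  define Cd where "Cd = range (\<lambda>i. y0 $ i)"
  have bad: "\<exists>i. t - y0 $ i \<notin> Uset" if "t \<in> Z" for t using no that unfolding Z_def by blast
  have finCd: "finite Cd" unfolding Cd_def by simp
  have cardCd: "card Cd \<le> CARD('n)" unfolding Cd_def by (rule card_image_le) simp
  have Zin: "Z \<inter> {0<..<1} \<subseteq> Cd \<inter> {0<..<1}"
  proof
    fix t assume t: "t \<in> Z \<inter> {0<..<1}"
    then obtain i where i: "t - y0 $ i \<notin> Uset" using bad[of t] by blast
    have "t - y0 $ i = 0"
    proof (rule ccontr)
      assume "t - y0 $ i \<noteq> 0"
      then have "t - y0 $ i \<in> Uset" using t rng[rule_format, of i] by (auto simp: Uset_def)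
      then show False using i by blast
    qed
    then show "t \<in> Cd \<inter> {0<..<1}" using t unfolding Cd_def by auto
  qed
  have endp: "\<exists>c\<in>Cd. c \<notin> {0<..<1}" if tZ: "t \<in> Z" and t01': "t = 0 \<or> t = 1" for t
  proof -
    obtain i where i: "t - y0 $ i \<notin> Uset" using bad[OF tZ] by blast
    have "y0 $ i \<notin> {0<..<1}"
    proof
      assume "y0 $ i \<in> {0<..<1}"
      then have "t - y0 $ i \<in> Uset" using t01' by (auto simp: Uset_def)
      then show False using i by blast
    qed
    then show ?thesis unfolding Cd_def by blast
  qed
  have finZ: "finite (Z \<inter> {0<..<1})" using Zin finCd by (meson finite_Int finite_subset)
  have cZ: "card (Z \<inter> {0<..<1}) \<le> card (Cd \<inter> {0<..<1})" using Zin finCd by (intro card_mono) auto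
  define w where "w = real (card (Z \<inter> {0<..<1})) + (if 0 \<in> Z then 1/2 else 0) + (if 1 \<in> Z then 1/2 else 0)"
  have wZ: "weight01 Z = ereal w" unfolding weight01_def w_def using finZ by simp
  have "w \<le> real CARD('n)"
  proof (cases "0 \<in> Z \<or> 1 \<in> Z")
    case True
    then obtain c where c: "c \<in> Cd" "c \<notin> {0<..<1}" using endp by blast
    have "card (insert c (Cd \<inter> {0<..<1})) \<le> card Cd" using c finCd by (intro card_mono) auto
    moreover have "card (insert c (Cd \<inter> {0<..<1})) = card (Cd \<inter> {0<..<1}) + 1"
      using c finCd by simp
    ultimately have "card (Cd \<inter> {0<..<1}) + 1 \<le> CARD('n)" using cardCd by linarith
    then have "card (Z \<inter> {0<..<1}) + 1 \<le> CARD('n)" using cZ by linarith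
    then have "real (card (Z \<inter> {0<..<1})) + 1 \<le> real CARD('n)" by linarith
    moreover have "(if 0 \<in> Z then 1/2 else 0) + (if 1 \<in> Z then 1/2 else 0) \<le> (1::real)" by simp
    ultimately show ?thesis unfolding w_def by linarith
  next
    case False
    have "card (Cd \<inter> {0<..<1}) \<le> card Cd" using finCd by (intro card_mono) auto
    then have "card (Z \<inter> {0<..<1}) \<le> CARD('n)" using cZ cardCd by linarith
    then show ?thesis using False unfolding w_def by simp
  qed
  moreover have "weight01 Z > ereal (real CARD('n))" using nf unfolding n_field_function_def Z_def by blast
  ultimately show False using wZ by simp
qed

lemma Phi_comp: "Phi J K y $ i = real_of_ereal (mfun J K (pos i) y) - real_of_ereal (mfun J K (pos i - 1) y)"
  by (simp add: Phi_def)

lemma boundary_blowup: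
  assumes xY: "\<forall>k. x k \<in> Yset J K" and lim: "x \<longlonglongrightarrow> y0" and notY: "y0 \<notin> Yset J K"
  shows "filterlim (\<lambda>k. norm (Phi J K (x k))) at_top sequentially"
proof -
  have xS: "x k \<in> Sset" for k using xY by (simp add: Yset_def)
  have Npos: "real CARD('n) > 0" by simp
  have N1: "1 \<le> CARD('n)" using zero_less_card_finite[where 'a='n] by linarith
  have rng: "\<forall>i. 0 \<le> y0 $ i \<and> y0 $ i \<le> 1"
  proof
    fix i
    have li: "(\<lambda>k. x k $ i) \<longlonglongrightarrow> y0 $ i" using lim by (rule tendsto_vec_nth)
    have "0 \<le> y0 $ i" using li by (rule LIMSEQ_le_const) (use Sset_coord[OF xS] less_imp_le in blast)
    moreover have "y0 $ i \<le> 1" using li by (rule LIMSEQ_le_const2) (use Sset_coord[OF xS] less_imp_le in blast)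
    ultimately show "0 \<le> y0 $ i \<and> y0 $ i \<le> 1" by simp
  qed
  have close: "eventually (\<lambda>k. \<forall>m. \<bar>ypt (x k) m - ypt y0 m\<bar> < e) sequentially" if "e > 0" for e
  proof -
    have "eventually (\<lambda>k. dist (x k) y0 < e) sequentially" using lim that by (rule tendstoD)
    then show ?thesis by eventually_elim (use ypt_dist order_le_less_trans in blast)
  qed
  have up: "\<exists>j\<le>CARD('n). \<forall>L. eventually (\<lambda>k. mfun J K j (x k) \<le> ereal L) sequentially"
  proof (cases "y0 \<in> Sset")
    case False
    then obtain j where j: "j \<le> CARD('n)" and gap: "ypt y0 (j+1) \<le> ypt y0 j"
      unfolding Sset_def by (auto simp: not_less)
    define j' where "j' = (if j = 0 then 1 else j)"
    have j': "1 \<le> j'" "j' \<le> CARD('n)" "j' = j \<or> j' = j + 1" "j = 0 \<longrightarrow> j' = j + 1" "j \<noteq> 0 \<longrightarrow> j' = j"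
      using j N1 by (auto simp: j'_def)
    have "\<forall>L. eventually (\<lambda>k. mfun J K j (x k) \<le> ereal L) sequentially"
    proof
      fix L
      obtain \<delta> where d: "\<delta> > 0"
        "\<forall>x\<in>Sset. \<forall>t\<in>{0..1}. \<forall>i. \<bar>t - x $ i\<bar> < \<delta> \<longrightarrow> Ffun J K x t \<le> ereal (- (- L))"
        using F_sing by blast
      show "eventually (\<lambda>k. mfun J K j (x k) \<le> ereal L) sequentially"
        using close[OF half_gt_zero[OF d(1)]]
      proof eventually_elim
        case (elim k)
        show ?case
        proof (rule m_le)
          fix t assume tI: "t \<in> {ypt (x k) j..ypt (x k) (j+1)}"
          have t01: "t \<in> {0..1}" using I_sub[OF xS j tI] .
          have e: "ypt (x k) j' = x k $ idx j'" using j' by (simp add: ypt_def)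
          have w: "ypt (x k) (j+1) - ypt (x k) j < \<delta>"
            using elim[rule_format, of j] elim[rule_format, of "j+1"] gap by argo
          have "\<bar>t - ypt (x k) j'\<bar> \<le> ypt (x k) (j+1) - ypt (x k) j"
          proof (cases "j = 0")
            case True then have "j' = j + 1" using j' by blast
            then show ?thesis using tI by auto
          next
            case False then have "j' = j" using j' by blast
            then show ?thesis using tI by auto
          qed
          then have "\<bar>t - x k $ idx j'\<bar> < \<delta>" using w e by linarith
          then show "Ffun J K (x k) t \<le> ereal L" using d(2)[rule_format, OF xS[of k] t01, of "idx j'"] by simp
        qed
      qed
    qed
    then show ?thesis using j by blast
  next
    case yS: True
    then obtain j where j: "j \<le> CARD('n)" and mj: "mfun J K j y0 = -\<infinity>"
      using notY unfolding Yset_def by auto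
    have "\<forall>L. eventually (\<lambda>k. mfun J K j (x k) \<le> ereal L) sequentially"
    proof
      fix L
      obtain \<delta> where d: "\<delta> > 0"
        "\<forall>x\<in>Sset. \<forall>t\<in>{0..1}. \<forall>i. \<bar>t - x $ i\<bar> < \<delta> \<longrightarrow> Ffun J K x t \<le> ereal (- (- L))"
        using F_sing by blast
      show "eventually (\<lambda>k. mfun J K j (x k) \<le> ereal L) sequentially"
        using close[OF d(1)]
      proof eventually_elim
        case (elim k)
        show ?case
        proof (rule m_le)
          fix t assume tI: "t \<in> {ypt (x k) j..ypt (x k) (j+1)}"
          have t01: "t \<in> {0..1}" using I_sub[OF xS j tI] .
          show "Ffun J K (x k) t \<le> ereal L"
          proof (cases "Ffun J K (x k) t = -\<infinity>")
            case True then show ?thesis by simp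
          next
            case Fne: False
            then have Jt: "J t \<noteq> -\<infinity>" using F_char[OF xS t01] by blast
            have "\<exists>i. \<bar>t - x k $ i\<bar> < \<delta>"
            proof (cases "j \<noteq> 0 \<and> t \<le> ypt y0 j")
              case True
              then have e: "ypt (x k) j = x k $ idx j" using j by (simp add: ypt_def)
              have "\<bar>t - ypt (x k) j\<bar> < \<delta>" using True tI elim[rule_format, of j] by auto
              then show ?thesis using e by metis
            next
              case c1: False
              show ?thesis
              proof (cases "j \<noteq> CARD('n) \<and> ypt y0 (j+1) \<le> t")
                case True
                then have e: "ypt (x k) (j+1) = x k $ idx (j+1)" using j by (simp add: ypt_def)
                have "\<bar>t - ypt (x k) (j+1)\<bar> < \<delta>" using True tI elim[rule_format, of "j+1"] by auto
                then show ?thesis using e by metis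
              next
                case c2: False
                have lo: "ypt y0 j \<le> t"
                  using c1 t01 by (cases "j = 0") auto
                have hi: "t \<le> ypt y0 (j+1)"
                  using c2 t01 by (cases "j = CARD('n)") auto
                have gp: "goodpt y0 j t" unfolding goodpt_def using lo hi c1 c2 by auto
                have "\<forall>i. t \<noteq> y0 $ i" using goodpt_not_coord[OF yS j gp] by blast
                then have "Ffun J K y0 t \<noteq> -\<infinity>" using F_char[OF yS t01] Jt by blast
                moreover have "Ffun J K y0 t \<le> mfun J K j y0" using lo hi by (intro m_ge) simp
                ultimately show ?thesis using mj by simp
              qed
            qed
            then obtain i where "\<bar>t - x k $ i\<bar> < \<delta>" by blast
            then show ?thesis using d(2)[rule_format, OF xS[of k] t01, of i] by simp
          qed
        qed
      qed
    qed
    then show ?thesis using j by blast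
  qed
  then obtain j where j: "j \<le> CARD('n)" and upj: "\<And>L. eventually (\<lambda>k. mfun J K j (x k) \<le> ereal L) sequentially"
    by blast
  obtain t where t01: "t \<in> {0..1}" and Jt: "J t \<noteq> -\<infinity>" and U0: "\<forall>i. t - y0 $ i \<in> Uset"
    using lower_exists[OF rng] by blast
  define L0 where "L0 = G y0 t - 1"
  have low: "eventually (\<lambda>k. \<exists>l\<le>CARD('n). ereal L0 \<le> mfun J K l (x k)) sequentially"
    using ev_seq[OF lim F_near[OF t01 Jt U0 zero_less_one]]
  proof eventually_elim
    case (elim k)
    obtain l where l: "l \<le> CARD('n)" "t \<in> {ypt (x k) l..ypt (x k) (l+1)}" using ypt_cover[OF xS t01] by blast
    have "ereal L0 \<le> Ffun J K (x k) t" using elim by (auto simp: L0_def abs_less_iff)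
    also have "\<dots> \<le> mfun J K l (x k)" using l(2) by (rule m_ge)
    finally show ?case using l(1) by blast
  qed
  show ?thesis unfolding filterlim_at_top
  proof
    fix Z :: real
    show "eventually (\<lambda>k. Z \<le> norm (Phi J K (x k))) sequentially"
      using upj[of "L0 - real CARD('n) * (\<bar>Z\<bar> + 1)"] low
    proof eventually_elim
      case (elim k)
      obtain l where l: "l \<le> CARD('n)" "ereal L0 \<le> mfun J K l (x k)" using elim by blast
      define r where "r = (\<lambda>p. real_of_ereal (mfun J K p (x k)))"
      have rl: "L0 \<le> r l" using l m_real[OF xY[rule_format, of k] l(1)] unfolding r_def
        by (metis ereal_less_eq(3))
      have rj: "r j \<le> L0 - real CARD('n) * (\<bar>Z\<bar> + 1)"
        using elim m_real[OF xY[rule_format, of k] j] unfolding r_def by (metis ereal_less_eq(3))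
      have "\<bar>r l - r j\<bar> \<le> real CARD('n) * norm (Phi J K (x k))"
        by (rule telescope_norm[OF _ j l(1)]) (simp add: Phi_comp r_def)
      then have "real CARD('n) * (\<bar>Z\<bar> + 1) \<le> real CARD('n) * norm (Phi J K (x k))"
        using rl rj by linarith
      then have "\<bar>Z\<bar> + 1 \<le> norm (Phi J K (x k))" using Npos by simp
      then show ?case by linarith
    qed
  qed
qed

lemma Phi_tendsto:
  assumes lim: "x \<longlonglongrightarrow> l" and lY: "l \<in> Yset J K"
  shows "(\<lambda>k. Phi J K (x k)) \<longlonglongrightarrow> Phi J K l"
proof -
  have m: "(\<lambda>k. real_of_ereal (mfun J K p (x k))) \<longlonglongrightarrow> real_of_ereal (mfun J K p l)"
    if p: "p \<le> CARD('n)" for p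
  proof -
    have "((\<lambda>y. real_of_ereal (mfun J K p y)) \<longlongrightarrow> real_of_ereal (mfun J K p l)) (nhds l)"
      unfolding tendsto_iff dist_real_def using m_cont[OF lY p] by blast
    then show ?thesis using filterlim_compose[OF _ lim] by blast
  qed
  show ?thesis
  proof (rule vec_tendstoI)
    fix i :: 'n
    have "pos i \<le> CARD('n)" "pos i - 1 \<le> CARD('n)" using pos_range[of i] by auto
    then show "((\<lambda>k. Phi J K (x k) $ i) \<longlongrightarrow> Phi J K l $ i) sequentially"
      unfolding Phi_comp by (intro tendsto_diff m)
  qed
qed

end

theorem proposition4p2:
  fixes J :: "real \<Rightarrow> ereal"
    and K :: "'n::{finite,linorder} \<Rightarrow> real \<Rightarrow> ereal"
  assumes "\<And>i. singular_kernel (K i)"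
    and "n_field_function CARD('n) J"
  shows "(\<forall>C. compact C \<longrightarrow> compact {y \<in> Yset J K. Phi J K y \<in> C})
       \<and> (\<forall>(x :: nat \<Rightarrow> real ^ 'n::{finite,linorder}) y0. (\<forall>k. x k \<in> Yset J K) \<longrightarrow> x \<longlonglongrightarrow> y0 \<longrightarrow>
            y0 \<in> frontier (Yset J K) \<longrightarrow> filterlim (\<lambda>k. norm (Phi J K (x k))) at_top sequentially)"
proof -
  interpret kset J K using assms by unfold_locales
  have P1: "compact {y \<in> Yset J K. Phi J K y \<in> C}" if C: "compact C" for C
  proof -
    let ?P = "{y \<in> Yset J K. Phi J K y \<in> C}"
    have bnd: "bounded ?P"
      unfolding bounded_iff
    proof (intro exI ballI)
      fix y assume "y \<in> ?P"
      then have yS: "y \<in> Sset" by (simp add: Yset_def)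
      have "norm y \<le> (\<Sum>i\<in>UNIV. \<bar>y $ i\<bar>)" by (rule norm_le_l1_cart)
      also have "\<dots> \<le> (\<Sum>i\<in>(UNIV::'n set). 1)"
        using Sset_coord[OF yS] by (intro sum_mono) (simp add: abs_le_iff less_imp_le)
      finally show "norm y \<le> real CARD('n)" by simp
    qed
    have cl: "closed ?P"
      unfolding closed_sequential_limits
    proof (intro allI impI)
      fix xs l assume h: "(\<forall>n. xs n \<in> ?P) \<and> xs \<longlonglongrightarrow> l"
      then have xY: "\<forall>n. xs n \<in> Yset J K" and xC: "\<forall>n. Phi J K (xs n) \<in> C" and lim: "xs \<longlonglongrightarrow> l"
        by auto
      show "l \<in> ?P"
      proof (cases "l \<in> Yset J K")
        case True
        have "(\<lambda>n. Phi J K (xs n)) \<longlonglongrightarrow> Phi J K l" by (rule Phi_tendsto[OF lim True])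
        moreover have cC: "closed C" using compact_imp_closed[OF C] .
        ultimately have "Phi J K l \<in> C"
          using cC[unfolded closed_sequential_limits, rule_format, of "\<lambda>n. Phi J K (xs n)" "Phi J K l"] xC
          by blast
        then show ?thesis using True by simp
      next
        case False
        have fl: "filterlim (\<lambda>k. norm (Phi J K (xs k))) at_top sequentially"
          by (rule boundary_blowup[OF xY lim False])
        obtain B where B: "\<forall>v\<in>C. norm v \<le> B" using compact_imp_bounded[OF C] unfolding bounded_iff by blast
        have "eventually (\<lambda>k. B + 1 \<le> norm (Phi J K (xs k))) sequentially"
          using fl unfolding filterlim_at_top by blast
        then obtain k where "B + 1 \<le> norm (Phi J K (xs k))" unfolding eventually_sequentially by blast
        moreover have "norm (Phi J K (xs k)) \<le> B" using B xC by blast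
        ultimately show ?thesis by simp
      qed
    qed
    show ?thesis using bnd cl by (simp add: compact_eq_bounded_closed)
  qed
  have P2: "filterlim (\<lambda>k. norm (Phi J K (x k))) at_top sequentially"
    if "\<forall>k. x k \<in> Yset J K" "x \<longlonglongrightarrow> y0" "y0 \<in> frontier (Yset J K)"
    for x :: "nat \<Rightarrow> real ^ 'n::{finite,linorder}" and y0
  proof -
    have "y0 \<notin> Yset J K" using that(3) interior_open[OF Y_open] by (simp add: frontier_def)
    then show ?thesis using boundary_blowup that(1,2) by blast
  qed
  show ?thesis using P1 P2 by blast
qed



end
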